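(* Let $\Pi\subset\mathbb R^2$ be a convex quadrilateral with counterclockwise extreme points $\mathbf v_1,\dots,\mathbf v_4$. For $\mathbf x\in\Pi$ let $D(\mathbf x)=\big(q(\mathbf x,\mathbf v_i)-w(\mathbf x,\mathbf v_i)\big)_{i=1}^{3}\in\mathbb R^3$ be the G$-$W discrepancy vector. Then any two non-zero vectors $D(\mathbf x),D(\mathbf y)$ ($\mathbf x,\mathbf y\in\Pi$) are parallel.
   Context: Gibbs coordinates $q(\mathbf x,\mathbf v_i)$: the unique probability distribution on the vertices with $\sum_iq(\mathbf x,\mathbf v_i)\mathbf v_i=\mathbf x$ maximizing the entropy $-\sum_i q\log q$ ($0\log0=0$). Wachspress coordinates: with $A(\mathbf p,\mathbf q,\mathbf r)=\tfrac12\det[\mathbf q-\mathbf p,\mathbf r-\mathbf p]$ and indices mod $4$, for interior $\mathbf x$, $w_i(\mathbf x)=A(\mathbf v_{i-1},\mathbf v_i,\mathbf v_{i+1})/(A(\mathbf v_{i-1},\mathbf v_i,\mathbf x)A(\mathbf x,\mathbf v_i,\mathbf v_{i+1}))$ and $w(\mathbf x,\mathbf v_i)=w_i(\mathbf x)/\sum_jw_j(\mathbf x)$; on an edge $[\mathbf v_j,\mathbf v_{j+1}]$ they are the barycentric coordinates with respect to $\mathbf v_j,\mathbf v_{j+1}$ and $0$ elsewhere. *)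

theory Defs
  imports "HOL-Analysis.Analysis"
begin

text \<open>Points of the plane are \<open>real^2\<close>; vertices are indexed by \<open>0..3\<close> (paper: 1..4),
  indices taken mod 4.\<close>

definition area2 :: "real^2 \<Rightarrow> real^2 \<Rightarrow> real^2 \<Rightarrow> real" where
  "area2 p q r = ((q - p)$1 * (r - p)$2 - (q - p)$2 * (r - p)$1) / 2"

definition vtx :: "(nat \<Rightarrow> real^2) \<Rightarrow> nat \<Rightarrow> real^2" where
  "vtx v i = v (i mod 4)"

definition polygon :: "(nat \<Rightarrow> real^2) \<Rightarrow> (real^2) set" where
  "polygon v = convex hull (v ` {0..<4})"

definition ccw_convex_quad :: "(nat \<Rightarrow> real^2) \<Rightarrow> bool" where
  "ccw_convex_quad v \<longleftrightarrow>
     inj_on v {0..<4} \<and>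
     (\<forall>i<4. v i extreme_point_of polygon v) \<and>
     (\<forall>i<4. area2 (vtx v (i + 3)) (vtx v i) (vtx v (i + 1)) > 0)"

definition feasible :: "(nat \<Rightarrow> real^2) \<Rightarrow> real^2 \<Rightarrow> (nat \<Rightarrow> real) \<Rightarrow> bool" where
  "feasible v x q \<longleftrightarrow> (\<forall>i. q i \<ge> 0) \<and> (\<forall>i\<ge>4. q i = 0) \<and>
     (\<Sum>i<4. q i) = 1 \<and> (\<Sum>i<4. q i *\<^sub>R v i) = x"

text \<open>Entropy; note \<open>ln 0 = 0\<close> in Isabelle, so \<open>0 * ln 0 = 0\<close>.\<close>
definition entropy :: "(nat \<Rightarrow> real) \<Rightarrow> real" where
  "entropy q = - (\<Sum>i<4. q i * ln (q i))"

definition gibbs :: "(nat \<Rightarrow> real^2) \<Rightarrow> real^2 \<Rightarrow> nat \<Rightarrow> real" where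
  "gibbs v x = (THE q. feasible v x q \<and> (\<forall>q'. feasible v x q' \<longrightarrow> entropy q' \<le> entropy q))"

definition wach_w :: "(nat \<Rightarrow> real^2) \<Rightarrow> real^2 \<Rightarrow> nat \<Rightarrow> real" where
  "wach_w v x i = area2 (vtx v (i + 3)) (vtx v i) (vtx v (i + 1)) /
     (area2 (vtx v (i + 3)) (vtx v i) x * area2 x (vtx v i) (vtx v (i + 1)))"

definition wach :: "(nat \<Rightarrow> real^2) \<Rightarrow> real^2 \<Rightarrow> nat \<Rightarrow> real" where
  "wach v x i =
    (if x \<in> interior (polygon v) then wach_w v x i / (\<Sum>j<4. wach_w v x j)
     else (let j = (SOME j. j < 4 \<and> x \<in> closed_segment (vtx v j) (vtx v (j + 1))) in
       if i = j then dist x (vtx v (j + 1)) / dist (vtx v j) (vtx v (j + 1))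
       else if i = (j + 1) mod 4 then dist x (vtx v j) / dist (vtx v j) (vtx v (j + 1))
       else 0))"

text \<open>Component \<open>i\<close> (\<open>i < 3\<close>, paper's \<open>i = 1,2,3\<close>) of the G-W discrepancy vector.\<close>
definition discrepancy :: "(nat \<Rightarrow> real^2) \<Rightarrow> real^2 \<Rightarrow> nat \<Rightarrow> real" where
  "discrepancy v x i = gibbs v x i - wach v x i"

end

theory Submission
  imports Defs
begin


lemma xlnx_cont: "continuous_on {0..} (\<lambda>s::real. s * ln s)"
proof -
  have lim: "((\<lambda>s::real. s * ln s) \<longlongrightarrow> 0) (at_right 0)"
  proof -
    have "((\<lambda>y::real. - (ln y / y)) \<longlongrightarrow> 0) at_top"
      using tendsto_minus[OF ln_x_over_x_tendsto_0] by simp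
    moreover have "eventually (\<lambda>y::real. - (ln y / y) = inverse y * ln (inverse y)) at_top"
      using eventually_gt_at_top[of 0] by eventually_elim (auto simp: ln_inverse divide_inverse)
    ultimately have "((\<lambda>y::real. inverse y * ln (inverse y)) \<longlongrightarrow> 0) at_top"
      by (rule Lim_transform_eventually)
    then show ?thesis by (simp add: filterlim_at_right_to_top)
  qed
  show ?thesis
  proof (clarsimp simp: continuous_on_eq_continuous_within)
    fix s :: real assume "0 \<le> s"
    show "continuous (at s within {0..}) (\<lambda>s. s * ln s)"
    proof (cases "s = 0")
      case True
      have "at (0::real) within {0..} = at_right 0"
      proof -
        have "{0::real..} - {0} = {0<..}" by auto
        then show ?thesis by (simp add: at_within_def)
      qed
      then show ?thesis using True lim by (simp add: continuous_within)
    next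
      case False
      then have "0 < s" using \<open>0 \<le> s\<close> by simp
      then have "isCont ln s" by (rule isCont_ln_pos)
      then have "isCont (\<lambda>s. s * ln s) s" by (intro continuous_mult continuous_ident)
      then show ?thesis by (rule continuous_at_imp_continuous_within)
    qed
  qed
qed

lemma g_ineq: fixes a m :: real assumes "0 \<le> a" "0 < m"
  shows "a * ln a - a * ln m \<ge> a - m" and "a \<noteq> m \<Longrightarrow> a * ln a - a * ln m > a - m"
proof -
  have main: "a * ln a - a * ln m \<ge> a - m \<and> (a \<noteq> m \<longrightarrow> a * ln a - a * ln m > a - m)"
  proof (cases "a = 0")
    case True then show ?thesis using assms by simp
  next
    case False
    then have a: "0 < a" using assms by simp
    have r: "0 < m / a" using a assms by simp
    have l: "ln (m / a) = ln m - ln a" using a assms by (simp add: ln_div)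
    have le: "ln (m/a) \<le> m/a - 1" using ln_le_minus_one[OF r] .
    have "a * ln (m/a) \<le> a * (m/a - 1)" using le a by (simp add: mult_left_mono)
    also have "\<dots> = m - a" using a by (simp add: field_simps)
    finally have 1: "a * ln a - a * ln m \<ge> a - m" using l by (simp add: algebra_simps)
    have 2: "a * ln a - a * ln m > a - m" if "a \<noteq> m"
    proof -
      have "m / a \<noteq> 1" using that a by simp
      then have "ln (m/a) \<noteq> m/a - 1" using ln_eq_minus_one[OF r] by blast
      then have "ln (m/a) < m/a - 1" using le by simp
      then have "a * ln (m/a) < a * (m/a - 1)" using a by simp
      also have "\<dots> = m - a" using a by (simp add: field_simps)
      finally show ?thesis using l by (simp add: algebra_simps)
    qed
    show ?thesis using 1 2 by blast
  qed
  then show "a * ln a - a * ln m \<ge> a - m" "a \<noteq> m \<Longrightarrow> a * ln a - a * ln m > a - m" by auto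
qed

lemma f_mid: fixes a b :: real assumes "0 \<le> a" "0 \<le> b"
  shows "((a+b)/2) * ln ((a+b)/2) \<le> (a * ln a + b * ln b)/2"
    and "a \<noteq> b \<Longrightarrow> ((a+b)/2) * ln ((a+b)/2) < (a * ln a + b * ln b)/2"
proof -
  have "((a+b)/2) * ln ((a+b)/2) \<le> (a * ln a + b * ln b)/2 \<and>
        (a \<noteq> b \<longrightarrow> ((a+b)/2) * ln ((a+b)/2) < (a * ln a + b * ln b)/2)"
  proof (cases "a = b")
    case True then show ?thesis by simp
  next
    case False
    define m where "m = (a+b)/2"
    have m: "0 < m" using assms False unfolding m_def by simp
    have am: "a \<noteq> m" using False unfolding m_def by simp
    have e1: "a * ln a - a * ln m > a - m" using g_ineq(2)[OF assms(1) m am] .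
    have e2: "b * ln b - b * ln m \<ge> b - m" using g_ineq(1)[OF assms(2) m] .
    have "m * ln m < (a * ln a + b * ln b)/2"
    proof -
      have ab: "a + b = 2 * m" unfolding m_def by simp
      have "a * ln a + b * ln b - (a * ln m + b * ln m) > 0" using e1 e2 ab by linarith
      moreover have "a * ln m + b * ln m = 2 * (m * ln m)"
      proof -
        have "a * ln m + b * ln m = (a + b) * ln m" by (simp add: distrib_right)
        then show ?thesis using ab by simp
      qed
      ultimately have "2 * (m * ln m) < a * ln a + b * ln b" by linarith
      then show ?thesis by simp
    qed
    then show ?thesis using False unfolding m_def by simp
  qed
  then show "((a+b)/2) * ln ((a+b)/2) \<le> (a * ln a + b * ln b)/2"
    and "a \<noteq> b \<Longrightarrow> ((a+b)/2) * ln ((a+b)/2) < (a * ln a + b * ln b)/2" by auto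
qed



lemma sum4: "(\<Sum>i<(4::nat). f i) = f 0 + f 1 + f 2 + (f 3 :: 'a::comm_monoid_add)"
  by (simp add: eval_nat_numeral lessThan_Suc add.assoc add.commute add.left_commute)

lemma all4: "(\<forall>i<(4::nat). P i) \<longleftrightarrow> P 0 \<and> P 1 \<and> P 2 \<and> P (3::nat)"
  by (auto simp: eval_nat_numeral less_Suc_eq)

lemma area2_alt: "area2 p q r = (q$1*r$2 - q$2*r$1 - p$1*r$2 + p$2*r$1 + p$1*q$2 - p$2*q$1)/2"
  by (simp add: area2_def algebra_simps)

lemma area2_cyc: "area2 p q r = area2 q r p"
  unfolding area2_alt by (simp add: algebra_simps)

lemma area2_same: "area2 p p q = 0" "area2 p q q = 0" "area2 p q p = 0"
  unfolding area2_alt by (simp_all add: algebra_simps)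

lemma k1: fixes a b c d :: "real^2"
  shows "area2 b c d - area2 a c d + area2 a b d - area2 a b c = 0"
  unfolding area2_alt by (simp add: field_simps)

lemma k2: fixes a b c d :: "real^2"
  shows "area2 b c d * a$j - area2 a c d * b$j + area2 a b d * c$j - area2 a b c * d$j = 0"
  using exhaust_2[of j] unfolding area2_alt by (auto simp add: field_simps)

lemma ker1: fixes a b c d :: "real^2" and d0 d1 d2 d3 :: real
  assumes "d0+d1+d2+d3 = 0" "d0*a$1+d1*b$1+d2*c$1+d3*d$1 = 0" "d0*a$2+d1*b$2+d2*c$2+d3*d$2 = 0"
  shows "d1 * area2 b c d = - d0 * area2 a c d"
proof -
  have "d1 * (2*area2 b c d) = - d0 * (2*area2 a c d)"
  using assms unfolding area2_alt by simp algebra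
  then show ?thesis by simp
qed

lemma ker2: fixes a b c d :: "real^2" and d0 d1 d2 d3 :: real
  assumes "d0+d1+d2+d3 = 0" "d0*a$1+d1*b$1+d2*c$1+d3*d$1 = 0" "d0*a$2+d1*b$2+d2*c$2+d3*d$2 = 0"
  shows "d2 * area2 b c d = d0 * area2 a b d"
proof -
  have "d2 * (2*area2 b c d) = d0 * (2*area2 a b d)"
  using assms unfolding area2_alt by simp algebra
  then show ?thesis by simp
qed

lemma ker3: fixes a b c d :: "real^2" and d0 d1 d2 d3 :: real
  assumes "d0+d1+d2+d3 = 0" "d0*a$1+d1*b$1+d2*c$1+d3*d$1 = 0" "d0*a$2+d1*b$2+d2*c$2+d3*d$2 = 0"
  shows "d3 * area2 b c d = - d0 * area2 a b c"
proof -
  have "d3 * (2*area2 b c d) = - d0 * (2*area2 a b c)"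
  using assms unfolding area2_alt by simp algebra
  then show ?thesis by simp
qed

definition Bf :: "real \<Rightarrow> real \<Rightarrow> real \<Rightarrow> real \<Rightarrow> real \<Rightarrow> real \<Rightarrow> real" where
  "Bf p1 p2 q1 q2 r1 r2 = q1*r2 - q2*r1 - p1*r2 + p2*r1 + p1*q2 - p2*q1"

lemma area2_Bf: "area2 p q r = Bf (p$1) (p$2) (q$1) (q$2) (r$1) (r$2) / 2"
  unfolding area2_alt Bf_def by simp

lemma wid0: fixes x1 x2 a1 a2 b1 b2 c1 c2 d1 d2 :: real
  shows "Bf d1 d2 a1 a2 b1 b2 * Bf x1 x2 b1 b2 c1 c2 * Bf x1 x2 c1 c2 d1 d2 * (a1 - x1)
       + Bf a1 a2 b1 b2 c1 c2 * Bf x1 x2 c1 c2 d1 d2 * Bf x1 x2 d1 d2 a1 a2 * (b1 - x1)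
       + Bf b1 b2 c1 c2 d1 d2 * Bf x1 x2 d1 d2 a1 a2 * Bf x1 x2 a1 a2 b1 b2 * (c1 - x1)
       + Bf c1 c2 d1 d2 a1 a2 * Bf x1 x2 a1 a2 b1 b2 * Bf x1 x2 b1 b2 c1 c2 * (d1 - x1) = 0"
  unfolding Bf_def by algebra

lemma wid1: fixes x1 x2 a1 a2 b1 b2 c1 c2 d1 d2 :: real
  shows "Bf d1 d2 a1 a2 b1 b2 * Bf x1 x2 b1 b2 c1 c2 * Bf x1 x2 c1 c2 d1 d2 * (a2 - x2)
       + Bf a1 a2 b1 b2 c1 c2 * Bf x1 x2 c1 c2 d1 d2 * Bf x1 x2 d1 d2 a1 a2 * (b2 - x2)
       + Bf b1 b2 c1 c2 d1 d2 * Bf x1 x2 d1 d2 a1 a2 * Bf x1 x2 a1 a2 b1 b2 * (c2 - x2)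
       + Bf c1 c2 d1 d2 a1 a2 * Bf x1 x2 a1 a2 b1 b2 * Bf x1 x2 b1 b2 c1 c2 * (d2 - x2) = 0"
  unfolding Bf_def by algebra

lemma div8: "(a/2) * (b/2) * (c/2) * (d::real) = (a*b*c*d)/8" by simp

lemma wid: fixes x p0 p1 p2 p3 :: "real^2"
  shows "area2 p3 p0 p1 * area2 x p1 p2 * area2 x p2 p3 * (p0$j - x$j)
       + area2 p0 p1 p2 * area2 x p2 p3 * area2 x p3 p0 * (p1$j - x$j)
       + area2 p1 p2 p3 * area2 x p3 p0 * area2 x p0 p1 * (p2$j - x$j)
       + area2 p2 p3 p0 * area2 x p0 p1 * area2 x p1 p2 * (p3$j - x$j) = 0"
proof (cases "j = 1")
  case True then show ?thesis unfolding area2_Bf div8 add_divide_distrib[symmetric]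
    using wid0[of "p3$1" "p3$2" "p0$1" "p0$2" "p1$1" "p1$2" "x$1" "x$2" "p2$1" "p2$2"] by simp
next
  case False then have "j = 2" using exhaust_2[of j] by auto
  then show ?thesis unfolding area2_Bf div8 add_divide_distrib[symmetric]
    using wid1[of "p3$1" "p3$2" "p0$1" "p0$2" "p1$1" "p1$2" "x$1" "x$2" "p2$1" "p2$2"] by simp
qed

lemma interior_halfplane:
  fixes S :: "(real^2) set" and p q x :: "real^2"
  assumes "x \<in> interior S" "S \<subseteq> {z. 0 \<le> area2 z p q}" "p \<noteq> q"
  shows "0 < area2 x p q"
proof -
  obtain e where e: "e > 0" "ball x e \<subseteq> S" using assms(1) mem_interior by blast
  define n :: "real^2" where "n = vector [(q-p)$2, -((q-p)$1)]"
  define t where "t = e / (2 * (norm n + 1))"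
  have pos: "0 < 2 * (norm n + 1)" by (smt (verit) norm_ge_zero)
  have t: "t > 0" unfolding t_def using e(1) pos by (rule divide_pos_pos)
  have "t * norm n < e"
  proof -
    have "t * norm n \<le> t * (norm n + 1)" using t by simp
    also have "\<dots> = e/2" unfolding t_def using pos by (simp add: field_simps)
    finally show ?thesis using e by simp
  qed
  then have "x + t *\<^sub>R n \<in> ball x e" using t by (simp add: dist_norm)
  then have "0 \<le> area2 (x + t *\<^sub>R n) p q" using e assms(2) by blast
  moreover have "area2 (x + t *\<^sub>R n) p q = area2 x p q - t * (((q-p)$1)^2 + ((q-p)$2)^2) / 2"
    unfolding area2_alt n_def by (simp add: vector_2 field_simps power2_eq_square)
  moreover have "((q-p)$1)^2 + ((q-p)$2)^2 > 0"
  proof -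
    have "(q-p)$1 \<noteq> 0 \<or> (q-p)$2 \<noteq> 0" using assms(3) by (metis (mono_tags) exhaust_2 vec_eq_iff zero_index eq_iff_diff_eq_0)
    then show ?thesis by (auto simp: add_pos_nonneg add_nonneg_pos)
  qed
  ultimately show ?thesis using t by (smt (verit) mult_pos_pos divide_pos_pos)
qed



lemma frac4: fixes a0 a1 a2 a3 :: real
  assumes "a0 \<noteq> 0" "a1 \<noteq> 0" "a2 \<noteq> 0" "a3 \<noteq> 0"
  shows "A0/(a3*a0)*c0 + A1/(a0*a1)*c1 + A2/(a1*a2)*c2 + A3/(a2*a3)*c3
    = (A0*a1*a2*c0 + A1*a2*a3*c1 + A2*a3*a0*c2 + A3*a0*a1*c3)/(a0*a1*a2*a3)"
  using assms by (simp add: field_simps)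

lemma vsum4_comp: "(\<Sum>i<(4::nat). l i *\<^sub>R (w i :: real^2)) $ j = l 0 * w 0 $ j + l 1 * w 1 $ j + l 2 * w 2 $ j + l 3 * w 3 $ j"
  by (simp add: sum4)


lemma area2_lin: "area2 z p q = z$1 * ((p$2 - q$2)/2) + z$2 * ((q$1 - p$1)/2) + (p$1*q$2 - p$2*q$1)/2"
  unfolding area2_alt by (simp add: field_simps)

lemma area2_cont: "continuous_on UNIV (\<lambda>z::real^2. area2 z p q)"
proof -
  have c1: "continuous_on UNIV (\<lambda>z::real^2. z$1)" "continuous_on UNIV (\<lambda>z::real^2. z$2)"
    by (rule continuous_on_component[OF continuous_on_id])+
  show ?thesis unfolding area2_lin
    by (intro continuous_on_add continuous_on_mult_right c1 continuous_on_const)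
qed

lemma mods: "(0::nat) mod 4 = 0" "(1::nat) mod 4 = 1" "(2::nat) mod 4 = 2" "(3::nat) mod 4 = 3"
  "(4::nat) mod 4 = 0" "(5::nat) mod 4 = 1" "(6::nat) mod 4 = 2" by simp_all

lemma vtx_vals: "vtx v 0 = v 0" "vtx v 1 = v 1" "vtx v 2 = v 2" "vtx v 3 = v 3"
  "vtx v 4 = v 0" "vtx v 5 = v 1" "vtx v 6 = v 2"
  unfolding vtx_def mods by (rule refl)+

lemma idx: "(1::nat)+1 = 2" "(1::nat)+3 = 4" "(2::nat)+1=3" "(2::nat)+3 = 5" "(3::nat)+1 = 4" "(3::nat)+3 = 6"
    "(0::nat)+3 = 3" "(0::nat)+1 = 1" by simp_all

lemma area2_rot: "area2 a b x = area2 x a b" by (metis area2_cyc)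

lemma seg_helper: fixes x p q :: "real^2"
  assumes "\<And>j. x$j = a * p$j + b * q$j" "a + b = 1" "0 \<le> a" "0 \<le> b"
  shows "x \<in> closed_segment p q"
proof -
  have a: "a = 1 - b" using assms(2) by simp
  have "x = (1 - b) *\<^sub>R p + b *\<^sub>R q"
    unfolding vec_eq_iff using assms(1) a by simp
  moreover have "b \<le> 1" using assms by simp
  ultimately show ?thesis using assms(4) unfolding in_segment(1) by blast
qed

lemma zero2: fixes l2 l3 P Q :: real
  assumes "0 \<le> l2" "0 \<le> l3" "0 < P" "0 < Q" "l2 * P + l3 * Q = 0"
  shows "l2 = 0" "l3 = 0"
proof -
  have "0 \<le> l2 * P" "0 \<le> l3 * Q" using assms by simp_all
  then have "l2 * P = 0" "l3 * Q = 0" using assms(5) by linarith+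
  then show "l2 = 0" "l3 = 0" using assms(3,4) by simp_all
qed

lemma sel_sum: fixes v :: "nat \<Rightarrow> real^2" assumes "j < 4"
  shows "(\<Sum>i<4. (if i = j then \<alpha> else if i = (j+1) mod 4 then \<beta> else 0)) = \<alpha> + \<beta>"
    "(\<Sum>i<4. (if i = j then \<alpha> else if i = (j+1) mod 4 then \<beta> else 0) *\<^sub>R v i)
      = \<alpha> *\<^sub>R v j + \<beta> *\<^sub>R v ((j+1) mod 4)"
proof -
  have "j = 0 \<or> j = 1 \<or> j = 2 \<or> j = 3" using assms by auto
  then show "(\<Sum>i<4. (if i = j then \<alpha> else if i = (j+1) mod 4 then \<beta> else 0)) = \<alpha> + \<beta>"
    "(\<Sum>i<4. (if i = j then \<alpha> else if i = (j+1) mod 4 then \<beta> else 0) *\<^sub>R v i)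
      = \<alpha> *\<^sub>R v j + \<beta> *\<^sub>R v ((j+1) mod 4)"
    by (auto simp: sum4)
qed

definition kv :: "(nat \<Rightarrow> real^2) \<Rightarrow> nat \<Rightarrow> real" where
  "kv v i = (if i = 0 then area2 (v 1) (v 2) (v 3) else if i = 1 then - area2 (v 0) (v 2) (v 3)
     else if i = 2 then area2 (v 0) (v 1) (v 3) else if i = 3 then - area2 (v 0) (v 1) (v 2) else 0)"

context
  fixes v :: "nat \<Rightarrow> real^2"
  assumes cq: "ccw_convex_quad v"
begin

lemma pos: "0 < area2 (v 3) (v 0) (v 1)" "0 < area2 (v 0) (v 1) (v 2)"
  "0 < area2 (v 1) (v 2) (v 3)" "0 < area2 (v 2) (v 3) (v 0)"
proof -
  have h: "\<forall>i<4. area2 (vtx v (i + 3)) (vtx v i) (vtx v (i + 1)) > 0"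
    using cq unfolding ccw_convex_quad_def by blast
  have e: "(1::nat)+1 = 2" "(1::nat)+3 = 4" "(2::nat)+1=3" "(2::nat)+3 = 5" "(3::nat)+1 = 4" "(3::nat)+3 = 6"
    "(0::nat)+3 = 3" "(0::nat)+1 = 1" by simp_all
  show "0 < area2 (v 3) (v 0) (v 1)" using h[rule_format, of 0] unfolding e by (simp add: vtx_def)
  show "0 < area2 (v 0) (v 1) (v 2)" using h[rule_format, of 1] unfolding e by (simp add: vtx_def)
  show "0 < area2 (v 1) (v 2) (v 3)" using h[rule_format, of 2] unfolding e by (simp add: vtx_def)
  show "0 < area2 (v 2) (v 3) (v 0)" using h[rule_format, of 3] unfolding e by (simp add: vtx_def)
qed

lemma posv: "0 < area2 (v 2) (v 0) (v 1)" "0 < area2 (v 3) (v 0) (v 1)"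
  "0 < area2 (v 3) (v 1) (v 2)" "0 < area2 (v 0) (v 1) (v 2)"
  "0 < area2 (v 0) (v 2) (v 3)" "0 < area2 (v 1) (v 2) (v 3)"
  "0 < area2 (v 1) (v 3) (v 0)" "0 < area2 (v 2) (v 3) (v 0)"
  using pos area2_cyc by metis+

lemma distinct_adj: "v 0 \<noteq> v 1" "v 1 \<noteq> v 2" "v 2 \<noteq> v 3" "v 3 \<noteq> v 0"
proof -
  show "v 0 \<noteq> v 1" using pos(1) by (auto simp: area2_same)
  show "v 1 \<noteq> v 2" using pos(2) by (auto simp: area2_same)
  show "v 2 \<noteq> v 3" using pos(3) by (auto simp: area2_same)
  show "v 3 \<noteq> v 0" using pos(4) by (auto simp: area2_same)
qed

lemma inj: "inj_on v {0..<4}" using cq unfolding ccw_convex_quad_def by blast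

lemma feas_iff: "x \<in> polygon v \<longleftrightarrow> (\<exists>l. feasible v x l)"
proof
  assume "x \<in> polygon v"
  then obtain u where u: "\<forall>y\<in>v ` {0..<4}. 0 \<le> u y" "sum u (v ` {0..<4}) = 1"
    "(\<Sum>y\<in>v ` {0..<4}. u y *\<^sub>R y) = x"
    unfolding polygon_def by (subst (asm) convex_hull_finite) auto
  define l where "l i = (if i < 4 then u (v i) else 0)" for i
  have "(\<Sum>i<4. l i) = sum u (v ` {0..<4})"
    by (simp add: sum.reindex[OF inj, unfolded atLeast0LessThan] l_def atLeast0LessThan)
  moreover have "(\<Sum>i<4. l i *\<^sub>R v i) = (\<Sum>y\<in>v ` {0..<4}. u y *\<^sub>R y)"
    by (simp add: sum.reindex[OF inj, unfolded atLeast0LessThan] l_def atLeast0LessThan)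
  ultimately have "feasible v x l" using u unfolding feasible_def l_def by auto
  then show "\<exists>l. feasible v x l" by blast
next
  assume "\<exists>l. feasible v x l"
  then obtain l where l: "feasible v x l" ..
  have "(\<Sum>i\<in>{..<4}. l i *\<^sub>R v i) \<in> polygon v"
    unfolding polygon_def
    by (rule convex_sum) (use l in \<open>auto simp: feasible_def intro: hull_inc\<close>)
  then show "x \<in> polygon v" using l unfolding feasible_def by simp
qed

lemma feas_coords: assumes "feasible v z l"
  shows "z$j = l 0 * v 0$j + l 1 * v 1$j + l 2 * v 2 $ j + l 3 * v 3$j"
    "l 0 + l 1 + l 2 + l 3 = 1" "\<And>i. 0 \<le> l i"
proof -
  have zz: "z = (\<Sum>i<4. l i *\<^sub>R v i)" using assms unfolding feasible_def by simp
  show "z$j = l 0 * v 0$j + l 1 * v 1$j + l 2 * v 2 $ j + l 3 * v 3$j"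
    unfolding zz vsum4_comp ..
  show "l 0 + l 1 + l 2 + l 3 = 1" using assms unfolding feasible_def by (simp add: sum4)
  show "\<And>i. 0 \<le> l i" using assms unfolding feasible_def by simp
qed

lemma area2_aff: assumes "feasible v z l"
  shows "area2 z p q = l 0 * area2 (v 0) p q + l 1 * area2 (v 1) p q + l 2 * area2 (v 2) p q + l 3 * area2 (v 3) p q"
proof -
  note c = feas_coords[OF assms]
  have "2 * area2 z p q = 2 * (l 0 * area2 (v 0) p q + l 1 * area2 (v 1) p q + l 2 * area2 (v 2) p q + l 3 * area2 (v 3) p q)"
    using c(1)[of 1] c(1)[of 2] c(2) unfolding area2_def by simp algebra
  then show ?thesis by simp
qed

lemma half_nonneg: assumes "z \<in> polygon v"
  shows "0 \<le> area2 z (v 0) (v 1)" "0 \<le> area2 z (v 1) (v 2)" "0 \<le> area2 z (v 2) (v 3)" "0 \<le> area2 z (v 3) (v 0)"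
proof -
  obtain l where l: "feasible v z l" using assms feas_iff by blast
  note nn = feas_coords(3)[OF l]
  show "0 \<le> area2 z (v 0) (v 1)" unfolding area2_aff[OF l] area2_same
    using nn posv by (simp add: less_imp_le)
  show "0 \<le> area2 z (v 1) (v 2)" unfolding area2_aff[OF l] area2_same
    using nn posv by (simp add: less_imp_le)
  show "0 \<le> area2 z (v 2) (v 3)" unfolding area2_aff[OF l] area2_same
    using nn posv by (simp add: less_imp_le)
  show "0 \<le> area2 z (v 3) (v 0)" unfolding area2_aff[OF l] area2_same
    using nn posv by (simp add: less_imp_le)
qed


lemma wach_w_vals:
  "wach_w v x 0 = area2 (v 3) (v 0) (v 1) / (area2 x (v 3) (v 0) * area2 x (v 0) (v 1))"
  "wach_w v x 1 = area2 (v 0) (v 1) (v 2) / (area2 x (v 0) (v 1) * area2 x (v 1) (v 2))"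
  "wach_w v x 2 = area2 (v 1) (v 2) (v 3) / (area2 x (v 1) (v 2) * area2 x (v 2) (v 3))"
  "wach_w v x 3 = area2 (v 2) (v 3) (v 0) / (area2 x (v 2) (v 3) * area2 x (v 3) (v 0))"
proof -
  show "wach_w v x 0 = area2 (v 3) (v 0) (v 1) / (area2 x (v 3) (v 0) * area2 x (v 0) (v 1))"
    unfolding wach_w_def idx vtx_vals by (simp only: area2_rot[of "v 3" "v 0" x])
  show "wach_w v x 1 = area2 (v 0) (v 1) (v 2) / (area2 x (v 0) (v 1) * area2 x (v 1) (v 2))"
    unfolding wach_w_def idx vtx_vals by (simp only: area2_rot[of "v 0" "v 1" x])
  show "wach_w v x 2 = area2 (v 1) (v 2) (v 3) / (area2 x (v 1) (v 2) * area2 x (v 2) (v 3))"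
    unfolding wach_w_def idx vtx_vals by (simp only: area2_rot[of "v 1" "v 2" x])
  show "wach_w v x 3 = area2 (v 2) (v 3) (v 0) / (area2 x (v 2) (v 3) * area2 x (v 3) (v 0))"
    unfolding wach_w_def idx vtx_vals by (simp only: area2_rot[of "v 2" "v 3" x])
qed

lemma wach_rep:
  assumes a: "0 < area2 x (v 0) (v 1)" "0 < area2 x (v 1) (v 2)" "0 < area2 x (v 2) (v 3)" "0 < area2 x (v 3) (v 0)"
  shows "\<forall>i<4. 0 < wach_w v x i"
    and "(\<Sum>i<4. wach_w v x i *\<^sub>R v i) = (\<Sum>i<4. wach_w v x i) *\<^sub>R x"
proof -
  show "\<forall>i<4. 0 < wach_w v x i"
    unfolding all4 wach_w_vals using a pos by (simp add: divide_pos_pos)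
  have "\<And>j. (\<Sum>i<4. wach_w v x i *\<^sub>R v i) $ j = ((\<Sum>i<4. wach_w v x i) *\<^sub>R x) $ j"
  proof -
    fix j
    have "wach_w v x 0 * (v 0 $ j - x $ j) + wach_w v x 1 * (v 1 $ j - x $ j)
        + wach_w v x 2 * (v 2 $ j - x $ j) + wach_w v x 3 * (v 3 $ j - x $ j) = 0"
      unfolding wach_w_vals
      apply (subst frac4)
      using a apply simp_all
      using wid[of "v 3" "v 0" "v 1" x "v 2" j] by simp
    then show "(\<Sum>i<4. wach_w v x i *\<^sub>R v i) $ j = ((\<Sum>i<4. wach_w v x i) *\<^sub>R x) $ j"
      unfolding vsum4_comp by (simp add: sum4 algebra_simps)
  qed
  then show "(\<Sum>i<4. wach_w v x i *\<^sub>R v i) = (\<Sum>i<4. wach_w v x i) *\<^sub>R x"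
    by (simp add: vec_eq_iff)
qed

lemma wach_feas_pos:
  assumes a: "0 < area2 x (v 0) (v 1)" "0 < area2 x (v 1) (v 2)" "0 < area2 x (v 2) (v 3)" "0 < area2 x (v 3) (v 0)"
  shows "feasible v x (\<lambda>i. if i < 4 then wach_w v x i / (\<Sum>j<4. wach_w v x j) else 0)"
proof -
  note r = wach_rep[OF a]
  define W where "W = (\<Sum>j<4. wach_w v x j)"
  have W: "0 < W" unfolding W_def using r(1) by (intro sum_pos) (auto simp: lessThan_empty_iff)
  have "(\<Sum>i<4. (if i < 4 then wach_w v x i / W else 0)) = (\<Sum>i<4. wach_w v x i / W)"
    by (rule sum.cong) auto
  also have "\<dots> = 1" using W by (simp add: sum_divide_distrib[symmetric] W_def)
  finally have s1: "(\<Sum>i<4. (if i < 4 then wach_w v x i / W else 0)) = 1" .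
  have "(\<Sum>i<4. (if i < 4 then wach_w v x i / W else 0) *\<^sub>R v i) = (\<Sum>i<4. (1/W) *\<^sub>R (wach_w v x i *\<^sub>R v i))"
    by (rule sum.cong) auto
  also have "\<dots> = (1/W) *\<^sub>R (\<Sum>i<4. wach_w v x i *\<^sub>R v i)" by (simp add: scaleR_sum_right)
  also have "\<dots> = x" using W r(2) by (simp add: W_def)
  finally have s2: "(\<Sum>i<4. (if i < 4 then wach_w v x i / W else 0) *\<^sub>R v i) = x" .
  show ?thesis unfolding feasible_def W_def[symmetric] using s1 s2 r(1) W
    by (auto simp: less_imp_le)
qed

lemma pos_interior:
  assumes a: "0 < area2 x (v 0) (v 1)" "0 < area2 x (v 1) (v 2)" "0 < area2 x (v 2) (v 3)" "0 < area2 x (v 3) (v 0)"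
  shows "x \<in> interior (polygon v)"
proof -
  define U where "U = {z. 0 < area2 z (v 0) (v 1) \<and> 0 < area2 z (v 1) (v 2) \<and> 0 < area2 z (v 2) (v 3) \<and> 0 < area2 z (v 3) (v 0)}"
  have "open U" unfolding U_def
    by (intro open_Collect_conj open_Collect_less area2_cont continuous_on_const)
  moreover have "U \<subseteq> polygon v"
  proof
    fix z assume "z \<in> U"
    then show "z \<in> polygon v" unfolding U_def using wach_feas_pos feas_iff by blast
  qed
  ultimately have "U \<subseteq> interior (polygon v)" by (rule interior_maximal[rotated])
  moreover have "x \<in> U" unfolding U_def using a by blast
  ultimately show ?thesis by blast
qed

lemma interior_pos:
  assumes "x \<in> interior (polygon v)"
  shows "0 < area2 x (v 0) (v 1)" "0 < area2 x (v 1) (v 2)" "0 < area2 x (v 2) (v 3)" "0 < area2 x (v 3) (v 0)"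
proof -
  have sub: "polygon v \<subseteq> {z. 0 \<le> area2 z (v 0) (v 1)}" "polygon v \<subseteq> {z. 0 \<le> area2 z (v 1) (v 2)}"
    "polygon v \<subseteq> {z. 0 \<le> area2 z (v 2) (v 3)}" "polygon v \<subseteq> {z. 0 \<le> area2 z (v 3) (v 0)}"
    using half_nonneg by blast+
  show "0 < area2 x (v 0) (v 1)" by (rule interior_halfplane[OF assms sub(1) distinct_adj(1)])
  show "0 < area2 x (v 1) (v 2)" by (rule interior_halfplane[OF assms sub(2) distinct_adj(2)])
  show "0 < area2 x (v 2) (v 3)" by (rule interior_halfplane[OF assms sub(3) distinct_adj(3)])
  show "0 < area2 x (v 3) (v 0)" by (rule interior_halfplane[OF assms sub(4) distinct_adj(4)])
qed

lemma boundary_seg: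
  assumes "x \<in> polygon v" "x \<notin> interior (polygon v)"
  shows "\<exists>j<4. x \<in> closed_segment (vtx v j) (vtx v (j+1))"
proof -
  obtain l where l: "feasible v x l" using assms(1) feas_iff by blast
  note c = feas_coords[OF l]
  note hn = half_nonneg[OF assms(1)]
  have "\<not> (0 < area2 x (v 0) (v 1) \<and> 0 < area2 x (v 1) (v 2) \<and> 0 < area2 x (v 2) (v 3) \<and> 0 < area2 x (v 3) (v 0))"
    using pos_interior assms(2) by blast
  then have "area2 x (v 0) (v 1) = 0 \<or> area2 x (v 1) (v 2) = 0 \<or> area2 x (v 2) (v 3) = 0 \<or> area2 x (v 3) (v 0) = 0"
    using hn by linarith
  then show ?thesis
  proof (elim disjE)
    assume h: "area2 x (v 0) (v 1) = 0"
    have "l 2 * area2 (v 2) (v 0) (v 1) + l 3 * area2 (v 3) (v 0) (v 1) = 0"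
      using h unfolding area2_aff[OF l] area2_same by simp
    note z = zero2[OF c(3) c(3) posv(1) posv(2) this]
    have "x \<in> closed_segment (v 0) (v 1)"
      by (rule seg_helper[of _ "l 0" _ "l 1"]) (use c z in auto)
    then have "x \<in> closed_segment (vtx v 0) (vtx v (0+1))" unfolding idx vtx_vals .
    then show ?thesis by (intro exI[of _ "0::nat"]) simp
  next
    assume h: "area2 x (v 1) (v 2) = 0"
    have "l 3 * area2 (v 3) (v 1) (v 2) + l 0 * area2 (v 0) (v 1) (v 2) = 0"
      using h unfolding area2_aff[OF l] area2_same by simp
    note z = zero2[OF c(3) c(3) posv(3) posv(4) this]
    have "x \<in> closed_segment (v 1) (v 2)"
      by (rule seg_helper[of _ "l 1" _ "l 2"]) (use c z in auto)
    then have "x \<in> closed_segment (vtx v 1) (vtx v (1+1))" unfolding idx vtx_vals .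
    then show ?thesis by (intro exI[of _ "1::nat"]) simp
  next
    assume h: "area2 x (v 2) (v 3) = 0"
    have "l 0 * area2 (v 0) (v 2) (v 3) + l 1 * area2 (v 1) (v 2) (v 3) = 0"
      using h unfolding area2_aff[OF l] area2_same by simp
    note z = zero2[OF c(3) c(3) posv(5) posv(6) this]
    have "x \<in> closed_segment (v 2) (v 3)"
      by (rule seg_helper[of _ "l 2" _ "l 3"]) (use c z in auto)
    then have "x \<in> closed_segment (vtx v 2) (vtx v (2+1))" unfolding idx vtx_vals .
    then show ?thesis by (intro exI[of _ "2::nat"]) simp
  next
    assume h: "area2 x (v 3) (v 0) = 0"
    have "l 1 * area2 (v 1) (v 3) (v 0) + l 2 * area2 (v 2) (v 3) (v 0) = 0"
      using h unfolding area2_aff[OF l] area2_same by simp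
    note z = zero2[OF c(3) c(3) posv(7) posv(8) this]
    have "x \<in> closed_segment (v 3) (v 0)"
      by (rule seg_helper[of _ "l 3" _ "l 0"]) (use c z in auto)
    then have "x \<in> closed_segment (vtx v 3) (vtx v (3+1))" unfolding idx vtx_vals .
    then show ?thesis by (intro exI[of _ "3::nat"]) simp
  qed
qed


lemma wach_bary: assumes "x \<in> polygon v"
  shows "(\<Sum>i<4. wach v x i) = 1 \<and> (\<Sum>i<4. wach v x i *\<^sub>R v i) = x"
proof (cases "x \<in> interior (polygon v)")
  case True
  note a = interior_pos[OF True]
  have f: "feasible v x (\<lambda>i. if i < 4 then wach_w v x i / (\<Sum>j<4. wach_w v x j) else 0)"
    by (rule wach_feas_pos[OF a])
  have eq: "\<And>i. i < 4 \<Longrightarrow> wach v x i = (\<lambda>i. if i < 4 then wach_w v x i / (\<Sum>j<4. wach_w v x j) else 0) i"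
    using True by (simp add: wach_def)
  have "(\<Sum>i<4. wach v x i) = (\<Sum>i<4. (\<lambda>i. if i < 4 then wach_w v x i / (\<Sum>j<4. wach_w v x j) else 0) i)"
    by (rule sum.cong) (auto simp: eq)
  moreover have "(\<Sum>i<4. wach v x i *\<^sub>R v i) = (\<Sum>i<4. (\<lambda>i. if i < 4 then wach_w v x i / (\<Sum>j<4. wach_w v x j) else 0) i *\<^sub>R v i)"
    by (rule sum.cong) (auto simp: eq)
  ultimately show ?thesis using f unfolding feasible_def by simp
next
  case False
  define j where "j = (SOME j. j < 4 \<and> x \<in> closed_segment (vtx v j) (vtx v (j + 1)))"
  have jj: "j < 4 \<and> x \<in> closed_segment (vtx v j) (vtx v (j + 1))"
    unfolding j_def by (rule someI_ex[OF boundary_seg[OF assms False]])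
  define a where "a = vtx v j"
  define b where "b = vtx v (j + 1)"
  have ab: "a \<noteq> b"
  proof -
    have "j = 0 \<or> j = 1 \<or> j = 2 \<or> j = 3" using jj by auto
    then show ?thesis unfolding a_def b_def
    proof (elim disjE)
      assume h: "j = 0" show "vtx v j \<noteq> vtx v (j + 1)" unfolding h idx vtx_vals by (rule distinct_adj(1))
    next
      assume h: "j = 1" show "vtx v j \<noteq> vtx v (j + 1)" unfolding h idx vtx_vals by (rule distinct_adj(2))
    next
      assume h: "j = 2" show "vtx v j \<noteq> vtx v (j + 1)" unfolding h idx vtx_vals by (rule distinct_adj(3))
    next
      assume h: "j = 3" show "vtx v j \<noteq> vtx v (j + 1)" unfolding h idx vtx_vals by (rule distinct_adj(4))
    qed
  qed
  have av: "a = v j" unfolding a_def vtx_def using jj by simp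
  have bv: "b = v ((j + 1) mod 4)" unfolding b_def vtx_def by simp
  obtain u where u: "0 \<le> u" "u \<le> 1" "x = (1 - u) *\<^sub>R a + u *\<^sub>R b"
    using jj unfolding in_segment(1) a_def b_def by blast
  have dab: "0 < dist a b" using ab by simp
  have d1: "dist x b = (1 - u) * dist a b"
  proof -
    have "x - b = (1 - u) *\<^sub>R (a - b)" using u(3) by (simp add: algebra_simps)
    then show ?thesis using u(2) by (simp add: dist_norm)
  qed
  have d2: "dist x a = u * dist a b"
  proof -
    have "x - a = u *\<^sub>R (b - a)" using u(3) by (simp add: algebra_simps)
    then show ?thesis using u(1) by (simp add: dist_norm norm_minus_commute)
  qed
  have w: "\<And>i. wach v x i = (if i = j then 1 - u else if i = (j + 1) mod 4 then u else 0)"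
    using False dab unfolding wach_def Let_def j_def[symmetric] a_def[symmetric] b_def[symmetric] d1 d2
    by simp
  show ?thesis unfolding w sel_sum[OF conjunct1[OF jj]] using u(3) av bv by simp
qed

lemma kv_sum: "(\<Sum>i<4. kv v i) = 0" "(\<Sum>i<4. kv v i *\<^sub>R v i) = 0"
proof -
  show "(\<Sum>i<4. kv v i) = 0" using k1[where a="v 0" and b="v 1" and c="v 2" and d="v 3"] by (simp add: sum4 kv_def)
  have "\<And>j. (\<Sum>i<4. kv v i *\<^sub>R v i) $ j = 0"
    unfolding vsum4_comp using k2[where a="v 0" and b="v 1" and c="v 2" and d="v 3"] by (simp add: kv_def)
  then show "(\<Sum>i<4. kv v i *\<^sub>R v i) = 0" by (simp add: vec_eq_iff)
qed

lemma kv0: "0 < kv v 0" using pos(3) by (simp add: kv_def)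
lemma kv1: "kv v 1 = - area2 (v 0) (v 2) (v 3)" by (simp add: kv_def)
lemma kv_hi: "i \<ge> 4 \<Longrightarrow> kv v i = 0" by (simp add: kv_def)

lemma kernel: assumes "(\<Sum>i<4. d i) = 0" "(\<Sum>i<4. d i *\<^sub>R v i) = 0"
  shows "\<forall>i<4. d i * kv v 0 = d 0 * kv v i"
proof -
  have e0: "d 0 + d 1 + d 2 + d 3 = 0" using assms(1) by (simp add: sum4)
  have "(\<Sum>i<4. d i *\<^sub>R v i) $ 1 = 0" "(\<Sum>i<4. d i *\<^sub>R v i) $ 2 = 0" using assms(2) by simp_all
  then have e1: "d 0 * v 0 $ 1 + d 1 * v 1 $ 1 + d 2 * v 2 $ 1 + d 3 * v 3 $ 1 = 0"
     and e2: "d 0 * v 0 $ 2 + d 1 * v 1 $ 2 + d 2 * v 2 $ 2 + d 3 * v 3 $ 2 = 0"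
    unfolding vsum4_comp by simp_all
  note r1 = ker1[OF e0 e1 e2] and r2 = ker2[OF e0 e1 e2] and r3 = ker3[OF e0 e1 e2]
  show ?thesis unfolding all4 using r1 r2 r3 by (simp add: kv_def)
qed


lemma entropy_mid_strict:
  assumes "feasible v x q1" "feasible v x q2" "q1 \<noteq> q2"
  shows "entropy (\<lambda>i. (q1 i + q2 i) / 2) > (entropy q1 + entropy q2) / 2"
proof -
  have nn1: "\<And>i. 0 \<le> q1 i" and nn2: "\<And>i. 0 \<le> q2 i" using assms unfolding feasible_def by auto
  obtain i0 where i0: "q1 i0 \<noteq> q2 i0" using assms(3) by blast
  have "i0 < 4"
  proof (rule ccontr)
    assume "\<not> i0 < 4" then have "q1 i0 = 0" "q2 i0 = 0" using assms unfolding feasible_def by auto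
    then show False using i0 by simp
  qed
  have "(\<Sum>i<4. ((q1 i + q2 i)/2) * ln ((q1 i + q2 i)/2)) < (\<Sum>i<4. (q1 i * ln (q1 i) + q2 i * ln (q2 i))/2)"
    apply (rule sum_strict_mono_ex1)
      apply simp
    using f_mid(1) nn1 nn2 apply blast
    using f_mid(2)[OF nn1 nn2 i0] \<open>i0 < 4\<close> apply blast
    done
  also have "\<dots> = ((\<Sum>i<4. q1 i * ln (q1 i)) + (\<Sum>i<4. q2 i * ln (q2 i))) / 2"
    by (simp add: sum_divide_distrib[symmetric] sum.distrib)
  finally show ?thesis unfolding entropy_def by simp
qed

lemma feas_mid: assumes "feasible v x q1" "feasible v x q2"
  shows "feasible v x (\<lambda>i. (q1 i + q2 i) / 2)"
proof -
  have a: "(\<Sum>i<4. (q1 i + q2 i) / 2) = ((\<Sum>i<4. q1 i) + (\<Sum>i<4. q2 i)) / 2"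
    by (simp add: sum_divide_distrib[symmetric] sum.distrib)
  have b: "(\<Sum>i<4. ((q1 i + q2 i) / 2) *\<^sub>R v i) = (1/2) *\<^sub>R ((\<Sum>i<4. q1 i *\<^sub>R v i) + (\<Sum>i<4. q2 i *\<^sub>R v i))"
  proof -
    have "(\<Sum>i<4. ((q1 i + q2 i) / 2) *\<^sub>R v i) = (\<Sum>i<4. (1/2) *\<^sub>R (q1 i *\<^sub>R v i + q2 i *\<^sub>R v i))"
    proof (rule sum.cong)
      fix i show "((q1 i + q2 i) / 2) *\<^sub>R v i = (1/2) *\<^sub>R (q1 i *\<^sub>R v i + q2 i *\<^sub>R v i)"
        by (simp only: scaleR_add_left[symmetric] scaleR_scaleR) simp
    qed simp
    also have "\<dots> = (1/2) *\<^sub>R (\<Sum>i<4. q1 i *\<^sub>R v i + q2 i *\<^sub>R v i)"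
      by (rule scaleR_sum_right[symmetric])
    also have "\<dots> = (1/2) *\<^sub>R ((\<Sum>i<4. q1 i *\<^sub>R v i) + (\<Sum>i<4. q2 i *\<^sub>R v i))"
      by (simp only: sum.distrib)
    finally show ?thesis .
  qed
  show ?thesis using assms unfolding feasible_def a b by (auto simp: scaleR_add_right[symmetric])
qed

lemma gibbs_unique: "x \<in> polygon v \<Longrightarrow>
  \<exists>!q. feasible v x q \<and> (\<forall>q'. feasible v x q' \<longrightarrow> entropy q' \<le> entropy q)"
proof (rule ex_ex1I)
  assume "x \<in> polygon v"
  then obtain q0 where q0: "feasible v x q0" using feas_iff by blast
  define k where "k = kv v"
  define qt where "qt t = (\<lambda>i. q0 i + t * k i)" for t
  define T where "T = {t. \<forall>i<4. 0 \<le> q0 i + t * k i}"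
  have q0hi: "\<And>i. i \<ge> 4 \<Longrightarrow> q0 i = 0" using q0 unfolding feasible_def by auto
  have khi: "\<And>i. i \<ge> 4 \<Longrightarrow> k i = 0" unfolding k_def by (rule kv_hi)
  have feas_t: "feasible v x (qt t)" if "t \<in> T" for t
  proof -
    have "\<forall>i. 0 \<le> qt t i"
    proof
      fix i show "0 \<le> qt t i"
        using that q0hi[of i] khi[of i] unfolding qt_def T_def by (cases "i < 4") auto
    qed
    moreover have "\<forall>i\<ge>4. qt t i = 0" using q0hi khi unfolding qt_def by simp
    moreover have "(\<Sum>i<4. qt t i) = 1"
      using q0 kv_sum(1) unfolding qt_def k_def feasible_def
      by (simp add: sum.distrib sum_distrib_left[symmetric])
    moreover have "(\<Sum>i<4. qt t i *\<^sub>R v i) = x"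
    proof -
      have "(\<Sum>i<4. qt t i *\<^sub>R v i) = (\<Sum>i<4. q0 i *\<^sub>R v i) + t *\<^sub>R (\<Sum>i<4. k i *\<^sub>R v i)"
        unfolding qt_def by (simp add: scaleR_add_left sum.distrib scaleR_sum_right)
      then show ?thesis using q0 kv_sum(2) unfolding k_def feasible_def by simp
    qed
    ultimately show ?thesis unfolding feasible_def by blast
  qed
  have k0: "0 < k 0" unfolding k_def by (rule kv0)
  have A1: "0 < area2 (v 0) (v 2) (v 3)" by (rule posv(5))
  have k1': "k 1 = - area2 (v 0) (v 2) (v 3)" unfolding k_def by (rule kv1)
  have Tsub: "T \<subseteq> {- q0 0 / k 0 .. q0 1 / area2 (v 0) (v 2) (v 3)}"
  proof
    fix t assume "t \<in> T"
    then have "\<forall>i<4. 0 \<le> q0 i + t * k i" unfolding T_def by simp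
    then have "0 \<le> q0 0 + t * k 0" "0 \<le> q0 1 + t * k 1" unfolding all4 by simp_all
    then have h: "- q0 0 \<le> t * k 0" "t * area2 (v 0) (v 2) (v 3) \<le> q0 1" unfolding k1' by linarith+
    have l: "(- q0 0) / k 0 \<le> t" unfolding pos_divide_le_eq[OF k0] using h(1) by simp
    have u: "t \<le> q0 1 / area2 (v 0) (v 2) (v 3)" unfolding pos_le_divide_eq[OF A1] using h(2) by simp
    show "t \<in> {- q0 0 / k 0 .. q0 1 / area2 (v 0) (v 2) (v 3)}"
      unfolding atLeastAtMost_iff using l u by blast
  qed
  have "closed T"
    unfolding T_def all4 by (intro closed_Collect_conj closed_Collect_le continuous_intros)
  then have "compact ({- q0 0 / k 0 .. q0 1 / area2 (v 0) (v 2) (v 3)} \<inter> T)"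
    by (rule compact_Int_closed[OF compact_Icc])
  moreover have "{- q0 0 / k 0 .. q0 1 / area2 (v 0) (v 2) (v 3)} \<inter> T = T" using Tsub by blast
  ultimately have cT: "compact T" by simp
  have T0: "0 \<in> T" using q0 unfolding T_def feasible_def by simp
  define E where "E t = entropy (qt t)" for t
  have cE: "continuous_on T E"
  proof -
    have "continuous_on T (\<lambda>t. - (\<Sum>i<4. (q0 i + t * k i) * ln (q0 i + t * k i)))"
    proof (intro continuous_on_minus continuous_on_sum)
      fix i :: nat assume "i \<in> {..<4}"
      then have "(\<lambda>t. q0 i + t * k i) ` T \<subseteq> {0..}" unfolding T_def by auto
      then show "continuous_on T (\<lambda>t. (q0 i + t * k i) * ln (q0 i + t * k i))"
        by (rule continuous_on_compose2[OF xlnx_cont, rotated]) (intro continuous_intros)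
    qed
    then show ?thesis unfolding E_def entropy_def qt_def by simp
  qed
  obtain tm where tm: "tm \<in> T" "\<forall>t\<in>T. E t \<le> E tm"
    using continuous_attains_sup[OF cT _ cE] T0 by blast
  have "\<forall>q'. feasible v x q' \<longrightarrow> entropy q' \<le> entropy (qt tm)"
  proof (intro allI impI)
    fix q' assume q': "feasible v x q'"
    define d where "d i = q' i - q0 i" for i
    have "(\<Sum>i<4. d i) = 0" using q' q0 unfolding d_def feasible_def by (simp add: sum_subtractf)
    moreover have "(\<Sum>i<4. d i *\<^sub>R v i) = 0"
      using q' q0 unfolding d_def feasible_def by (simp add: scaleR_diff_left sum_subtractf)
    ultimately have ker: "\<forall>i<4. d i * k 0 = d 0 * k i" unfolding k_def by (rule kernel)
    define t' where "t' = d 0 / k 0"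
    have qeq: "q' = qt t'"
    proof
      fix i show "q' i = qt t' i"
      proof (cases "i < 4")
        case True
        then have "d i * k 0 = d 0 * k i" using ker by blast
        then have "d i = t' * k i" unfolding t'_def using k0 by (simp add: field_simps)
        then show ?thesis unfolding qt_def d_def by simp
      next
        case False
        then show ?thesis using q' q0hi khi unfolding qt_def feasible_def by simp
      qed
    qed
    have "\<And>i. q' i = q0 i + t' * k i" using qeq unfolding qt_def by simp
    moreover have "\<And>i. 0 \<le> q' i" using q' unfolding feasible_def by simp
    ultimately have "t' \<in> T" unfolding T_def by simp
    then have "E t' \<le> E tm" using tm by blast
    then show "entropy q' \<le> entropy (qt tm)" unfolding E_def qeq .
  qed
  then show "\<exists>q. feasible v x q \<and> (\<forall>q'. feasible v x q' \<longrightarrow> entropy q' \<le> entropy q)"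
    using feas_t[OF tm(1)] by blast
next
  fix q1 q2
  assume h1: "feasible v x q1 \<and> (\<forall>q'. feasible v x q' \<longrightarrow> entropy q' \<le> entropy q1)"
     and h2: "feasible v x q2 \<and> (\<forall>q'. feasible v x q' \<longrightarrow> entropy q' \<le> entropy q2)"
  show "q1 = q2"
  proof (rule ccontr)
    assume ne: "q1 \<noteq> q2"
    have fm: "feasible v x (\<lambda>i. (q1 i + q2 i) / 2)" using feas_mid h1 h2 by blast
    have "entropy (\<lambda>i. (q1 i + q2 i) / 2) \<le> entropy q1" "entropy (\<lambda>i. (q1 i + q2 i) / 2) \<le> entropy q2"
      using fm h1 h2 by blast+
    moreover have "entropy (\<lambda>i. (q1 i + q2 i) / 2) > (entropy q1 + entropy q2) / 2"
      using entropy_mid_strict h1 h2 ne by blast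
    then have "entropy q1 + entropy q2 < 2 * entropy (\<lambda>i. (q1 i + q2 i) / 2)" by (simp add: field_simps)
    ultimately show False by linarith
  qed
qed

lemma gibbs_feas: "x \<in> polygon v \<Longrightarrow> feasible v x (gibbs v x)"
  unfolding gibbs_def using theI'[OF gibbs_unique] by blast

lemma disc_ker: assumes "x \<in> polygon v"
  shows "\<forall>i<4. discrepancy v x i * kv v 0 = discrepancy v x 0 * kv v i"
proof (rule kernel)
  note g = gibbs_feas[OF assms] and w = wach_bary[OF assms]
  show "(\<Sum>i<4. discrepancy v x i) = 0"
    using g w unfolding discrepancy_def feasible_def by (simp add: sum_subtractf)
  show "(\<Sum>i<4. discrepancy v x i *\<^sub>R v i) = 0"
    using g w unfolding discrepancy_def feasible_def by (simp add: scaleR_diff_left sum_subtractf)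
qed

end

theorem corollary5p9:
  fixes v :: "nat \<Rightarrow> real^2" and x y :: "real^2"
  assumes "ccw_convex_quad v"
    and "x \<in> polygon v" and "y \<in> polygon v"
    and "\<exists>i<3. discrepancy v x i \<noteq> 0"
    and "\<exists>i<3. discrepancy v y i \<noteq> 0"
  shows "\<exists>c::real. \<forall>i<3. discrepancy v x i = c * discrepancy v y i"
proof -
  note kx = disc_ker[OF assms(1,2)] and ky = disc_ker[OF assms(1,3)]
  have k0: "0 < kv v 0" by (rule kv0[OF assms(1)])
  have ex: "\<And>i. i < 4 \<Longrightarrow> discrepancy v x i = discrepancy v x 0 / kv v 0 * kv v i"
    using kx k0 by (simp add: field_simps)
  have ey: "\<And>i. i < 4 \<Longrightarrow> discrepancy v y i = discrepancy v y 0 / kv v 0 * kv v i"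
    using ky k0 by (simp add: field_simps)
  have y0: "discrepancy v y 0 \<noteq> 0"
  proof
    assume z: "discrepancy v y 0 = 0"
    have "\<forall>i<3. discrepancy v y i = 0"
    proof (intro allI impI)
      fix i :: nat assume i3: "i < 3"
      have "discrepancy v y i = discrepancy v y 0 / kv v 0 * kv v i" by (rule ey) (use i3 in simp)
      then show "discrepancy v y i = 0" using z by simp
    qed
    then show False using assms(5) by blast
  qed
  show ?thesis
  proof (intro exI allI impI)
    fix i :: nat assume "i < 3"
    then have i4: "i < 4" by simp
    show "discrepancy v x i = discrepancy v x 0 / discrepancy v y 0 * discrepancy v y i"
      unfolding ex[OF i4] ey[OF i4] using y0 by (simp add: field_simps)
  qed
qed

end
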